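(* Fix parameters $0<\varepsilon<f<(1+\varepsilon)/2<1$ and $\sigma>0$. Let $pqr$ be a non-degenerate triangle in $\mathbb{R}^2$ with a designated apex (one of $p,q,r$) and a fixed ordering of its base vertices. Then there exists $\Delta>0$, depending only on the triangle $pqr$, its apex designation, $\varepsilon$, $f$ and $\sigma$, such that the following holds: whenever real values $\tau(p)\le\tau(q)\le\tau(r)$ make the triangle satisfy the adaptive progress constraint $\sigma$, then for every $\delta\in[0,\Delta]$ the values $\tau'(p)=\tau(p)+\delta$, $\tau'(q)=\tau(q)$, $\tau'(r)=\tau(r)$ also make the triangle satisfy the adaptive progress constraint $\sigma$ (with the same apex and base ordering).
   Context: Values at the vertices are extended affinely over the plane; $\tau$ of a midpoint means the value of that affine function. Diminished width: for a triangle written $abc$ with its apex listed first, $\mathrm{dw}(abc):=\min\{(1-\varepsilon)\operatorname{dist}(a,\operatorname{aff}(bc)),\,(1-f)\operatorname{dist}(b,\operatorname{aff}(ac)),\,(1-f)\operatorname{dist}(c,\operatorname{aff}(ab))\}$. Adaptive progress constraint $\sigma$: for a triangle with apex $a$ and base vertices $b,c$ (in the given order), with $d$ the midpoint of $bc$ and $e$ the midpoint of $ac$, require $|\tau(a)-\tau(b)|\le 2\,\mathrm{dw}(dca)\,\sigma$, $|\tau(a)-\tau(d)|\le\mathrm{dw}(abc)\,\sigma$, $|\tau(a)-\tau(c)|\le 2\,\mathrm{dw}(dab)\,\sigma$, and $|\tau(b)-\tau(c)|\le 4\,\mathrm{dw}(ead)\,\sigma$ (first-listed vertex in each $\mathrm{dw}$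 is its apex). *)

theory Defs
  imports "HOL-Analysis.Analysis"
begin

text \<open>Diminished width of the triangle written x y z with apex x (first-listed vertex).\<close>
definition dw :: "real \<Rightarrow> real \<Rightarrow> real^2 \<Rightarrow> real^2 \<Rightarrow> real^2 \<Rightarrow> real" where
  "dw \<epsilon> f x y z =
     min ((1 - \<epsilon>) * infdist x (affine hull {y, z}))
         (min ((1 - f) * infdist y (affine hull {x, z}))
              ((1 - f) * infdist z (affine hull {x, y})))"

text \<open>Adaptive progress constraint for the triangle with apex a and base vertices b, c
  (in this order), with values ta, tb, tc at a, b, c. The value of the affine extension
  at the midpoint d of bc is (tb + tc)/2.\<close>
definition apc :: "real \<Rightarrow> real \<Rightarrow> real \<Rightarrow> real^2 \<Rightarrow> real^2 \<Rightarrow> real^2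
                    \<Rightarrow> real \<Rightarrow> real \<Rightarrow> real \<Rightarrow> bool" where
  "apc \<epsilon> f \<sigma> a b c ta tb tc \<longleftrightarrow>
     (let d = midpoint b c; e = midpoint a c; td = (tb + tc) / 2 in
        \<bar>ta - tb\<bar> \<le> 2 * dw \<epsilon> f d c a * \<sigma> \<and>
        \<bar>ta - td\<bar> \<le> dw \<epsilon> f a b c * \<sigma> \<and>
        \<bar>ta - tc\<bar> \<le> 2 * dw \<epsilon> f d a b * \<sigma> \<and>
        \<bar>tb - tc\<bar> \<le> 4 * dw \<epsilon> f e a d * \<sigma>)"

end

theory Submission imports Defs begin

definition cr :: "real^2 \<Rightarrow> real^2 \<Rightarrow> real" where
  "cr u v = u$1 * v$2 - u$2 * v$1"

lemma norm2: "norm (v::real^2) = sqrt ((v$1)^2 + (v$2)^2)"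
  by (simp add: norm_vec_def L2_set_def sum_2)

lemma cr_le: "\<bar>cr u v\<bar> \<le> norm u * norm v"
proof -
  have "(cr u v)^2 \<le> ((u$1)^2 + (u$2)^2) * ((v$1)^2 + (v$2)^2)"
  proof -
    have "((u$1)^2 + (u$2)^2) * ((v$1)^2 + (v$2)^2) = (cr u v)^2 + (u$1 * v$1+u$2 * v$2)^2"
      by (simp add: cr_def power2_eq_square algebra_simps)
    thus ?thesis by simp
  qed
  hence "sqrt ((cr u v)^2) \<le> sqrt (((u$1)^2 + (u$2)^2) * ((v$1)^2 + (v$2)^2))"
    using real_sqrt_le_mono by blast
  thus ?thesis by (simp add: norm2 real_sqrt_mult)
qed

lemma alg2:
  fixes u1 u2 v1 v2 N t :: real
  assumes "N = u1^2+u2^2" "N > 0" "t = (u1* v1+u2* v2)/N"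
  shows "(v1 - t*u1)^2 + (v2 - t*u2)^2 = (u1* v2 - u2* v1)^2/N"
proof -
  have "N * ((v1 - t*u1)^2 + (v2 - t*u2)^2) = N*(v1^2+v2^2) - 2*t*N*(u1* v1+u2* v2) + t^2*N*N"
    using assms(1) by (simp add: power2_eq_square algebra_simps)
  also have "\<dots> = N*(v1^2+v2^2) - (u1* v1+u2* v2)^2"
  proof -
    have h: "u1* v1+u2* v2 = t*N" using assms(2,3) by simp
    show ?thesis unfolding h by (simp add: power2_eq_square algebra_simps)
  qed
  also have "\<dots> = (u1* v2 - u2* v1)^2" using assms(1) by (simp add: power2_eq_square algebra_simps)
  finally show ?thesis using assms(2) by (simp add: field_simps)
qed

lemma dist_line:
  assumes "y \<noteq> z"
  shows "infdist x (affine hull {y, z}) = \<bar>cr (z - y) (x - y)\<bar> / norm (z - y)"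
proof -
  let ?u = "z - y" and ?v = "x - y"
  have n0: "norm ?u > 0" using assms by simp
  have ne: "affine hull {y,z} \<noteq> {}" by simp
  have lo: "\<bar>cr ?u ?v\<bar> / norm ?u \<le> infdist x (affine hull {y, z})"
    unfolding infdist_notempty[OF ne]
  proof (rule cINF_greatest[OF ne])
    fix w assume "w \<in> affine hull {y,z}"
    then obtain t where w: "w = y + t *\<^sub>R (z - y)" by (auto simp: affine_hull_2_alt)
    have "cr ?u (x - w) = cr ?u ?v"
      by (simp add: w cr_def algebra_simps)
    hence "\<bar>cr ?u ?v\<bar> \<le> norm ?u * dist x w"
      using cr_le[of ?u "x - w"] by (simp add: dist_norm)
    thus "\<bar>cr ?u ?v\<bar> / norm ?u \<le> dist x w" using n0 by (simp add: divide_le_eq mult.commute)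
  qed
  define N where "N = (?u$1)^2 + (?u$2)^2"
  have N0: "N > 0" using n0 by (simp add: norm2 N_def)
  define t where "t = (?u$1 * ?v$1 + ?u$2 * ?v$2) / N"
  define w where "w = y + t *\<^sub>R ?u"
  have wm: "w \<in> affine hull {y,z}" by (auto simp: affine_hull_2_alt w_def)
  have "(dist x w)^2 = (cr ?u ?v)^2 / N"
  proof -
    have "(dist x w)^2 = (?v$1 - t * ?u$1)^2 + (?v$2 - t * ?u$2)^2"
      by (simp add: dist_norm norm2 w_def algebra_simps)
    also have "\<dots> = (cr ?u ?v)^2 / N"
      using alg2[OF N_def N0 t_def] unfolding cr_def by simp
    finally show ?thesis .
  qed
  hence "dist x w = sqrt ((cr ?u ?v)^2 / N)"
    by (metis zero_le_dist real_sqrt_unique)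
  also have "\<dots> = \<bar>cr ?u ?v\<bar> / norm ?u"
    by (simp add: real_sqrt_divide norm2 N_def)
  finally have "infdist x (affine hull {y,z}) \<le> \<bar>cr ?u ?v\<bar> / norm ?u"
    using infdist_le[OF wm, of x] by simp
  with lo show ?thesis by simp
qed

lemma infd:
  assumes "cr (z-y) (x-y) = k*K" "k \<noteq> 0" "K \<noteq> 0"
  shows "infdist x (affine hull {y,z}) = \<bar>k\<bar>*\<bar>K\<bar> / norm(z-y)" "infdist x (affine hull {y,z}) > 0"
proof -
  have "y \<noteq> z" using assms by (auto simp: cr_def)
  thus "infdist x (affine hull {y,z}) = \<bar>k\<bar>*\<bar>K\<bar> / norm(z-y)"
    using dist_line assms by (simp add: abs_mult)
  thus "infdist x (affine hull {y,z}) > 0" using assms \<open>y \<noteq> z\<close> by simp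
qed

lemma mid_comp: "(midpoint b c :: real^2)$i = (b$i + c$i)/2"
  by (simp add: midpoint_def)

lemma norm2sq: "(norm (v::real^2))^2 = (v$1)^2 + (v$2)^2"
  by (simp add: norm2)

lemma ineq1:
  fixes S la lb lc md \<epsilon> f :: real
  assumes "S > 0" "la > 0" "lb > 0" "lc > 0" "md > 0" "4*md^2 = 2*lb^2+2*lc^2-la^2"
    "0 < \<epsilon>" "\<epsilon> < f" "2*f < 1+\<epsilon>" "f < 1"
  shows "min ((1-\<epsilon>)*(S/(2*lc))) (min ((1-f)*(S/la)) ((1-f)*(S/(2*md))))
         < min ((1-\<epsilon>)*(S/la)) (min ((1-f)*(S/lb)) ((1-f)*(S/lc)))"
proof -
  have A: "(1-f)*(S/la) < (1-\<epsilon>)*(S/la)" using assms by (simp add: divide_simps)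
  have B: "(1-\<epsilon>)*(S/(2*lc)) < (1-f)*(S/lc)" using assms by (simp add: divide_simps)
  have C: "min ((1-f)*(S/la)) ((1-f)*(S/(2*md))) < (1-f)*(S/lb)"
  proof (cases "2*md > lb")
    case True
    hence "S/(2*md) < S/lb" using assms by (simp add: divide_strict_left_mono)
    hence "(1-f)*(S/(2*md)) < (1-f)*(S/lb)" using assms by (intro mult_strict_left_mono) auto
    thus ?thesis by (simp only: min_less_iff_disj) blast
  next
    case False
    hence "(2*md)^2 \<le> lb^2" using assms by (intro power_mono) auto
    moreover have "(2*md)^2 = 4*md^2" by (simp add: power2_eq_square)
    moreover have "0 < lb^2" "0 < lc^2" using assms by auto
    ultimately have "lb^2 < la^2" using assms by linarith
    hence "lb < la" using assms by (simp add: power_less_imp_less_base)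
    hence "S/la < S/lb" using assms by (simp add: divide_strict_left_mono)
    hence "(1-f)*(S/la) < (1-f)*(S/lb)" using assms by (intro mult_strict_left_mono) auto
    thus ?thesis by (simp only: min_less_iff_disj) blast
  qed
  show ?thesis using A B C by linarith
qed

lemma ineq2:
  fixes S la lb lc md \<epsilon> f :: real
  assumes "S > 0" "la > 0" "lb > 0" "lc > 0" "md > 0" "4*md^2 = 2*lb^2+2*lc^2-la^2"
    "0 < \<epsilon>" "\<epsilon> < f" "2*f < 1+\<epsilon>" "f < 1"
  shows "min ((1-\<epsilon>)*(S/(2*lb))) (min ((1-f)*(S/(2*md))) ((1-f)*(S/la)))
         < min ((1-\<epsilon>)*(S/la)) (min ((1-f)*(S/lb)) ((1-f)*(S/lc)))"
proof -
  have A: "(1-f)*(S/la) < (1-\<epsilon>)*(S/la)" using assms by (simp add: divide_simps)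
  have B: "(1-\<epsilon>)*(S/(2*lb)) < (1-f)*(S/lb)" using assms by (simp add: divide_simps)
  have C: "min ((1-f)*(S/la)) ((1-f)*(S/(2*md))) < (1-f)*(S/lc)"
  proof (cases "2*md > lc")
    case True
    hence "S/(2*md) < S/lc" using assms by (simp add: divide_strict_left_mono)
    hence "(1-f)*(S/(2*md)) < (1-f)*(S/lc)" using assms by (intro mult_strict_left_mono) auto
    thus ?thesis by (simp only: min_less_iff_disj) blast
  next
    case False
    hence "(2*md)^2 \<le> lc^2" using assms by (intro power_mono) auto
    moreover have "(2*md)^2 = 4*md^2" by (simp add: power2_eq_square)
    moreover have "0 < lb^2" "0 < lc^2" using assms by auto
    ultimately have "lc^2 < la^2" using assms by linarith
    hence "lc < la" using assms by (simp add: power_less_imp_less_base)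
    hence "S/la < S/lc" using assms by (simp add: divide_strict_left_mono)
    hence "(1-f)*(S/la) < (1-f)*(S/lc)" using assms by (intro mult_strict_left_mono) auto
    thus ?thesis by (simp only: min_less_iff_disj) blast
  qed
  show ?thesis using A B C by linarith
qed

lemma geo:
  fixes a b c :: "real^2" and \<epsilon> f :: real
  assumes K0: "cr (b-a) (c-a) \<noteq> 0"
    and e: "0 < \<epsilon>" "\<epsilon> < f" "2*f < 1+\<epsilon>" "f < 1"
  shows "dw \<epsilon> f a b c > 0" "dw \<epsilon> f (midpoint b c) c a > 0" "dw \<epsilon> f (midpoint b c) a b > 0"
        "dw \<epsilon> f (midpoint a c) a (midpoint b c) > 0"
        "dw \<epsilon> f (midpoint b c) a b < dw \<epsilon> f a b c"
        "dw \<epsilon> f (midpoint b c) c a < dw \<epsilon> f a b c"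
proof -
  define K where "K = cr (b-a) (c-a)"
  define d where "d = midpoint b c"
  define e' where "e' = midpoint a c"
  define S where "S = \<bar>K\<bar>"
  define la where "la = norm (b - c)"
  define lb where "lb = norm (a - c)"
  define lc where "lc = norm (a - b)"
  define md where "md = norm (a - d)"
  have K: "K \<noteq> 0" using K0 K_def by simp
  have S: "S > 0" using K S_def by simp
  note cs = K_def cr_def d_def e'_def mid_comp field_simps
  have c1: "cr (c-b) (a-b) = 1*K" by (simp add: cs)
  have c2: "cr (c-a) (b-a) = (-1)*K" by (simp add: cs)
  have c3: "cr (b-a) (c-a) = 1*K" by (simp add: cs)
  have c4: "cr (a-c) (d-c) = (1/2)*K" by (simp add: cs)
  have c5: "cr (a-d) (c-d) = (-1/2)*K" by (simp add: cs)
  have c6: "cr (c-d) (a-d) = (1/2)*K" by (simp add: cs)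
  have c7: "cr (b-a) (d-a) = (1/2)*K" by (simp add: cs)
  have c8: "cr (b-d) (a-d) = (-1/2)*K" by (simp add: cs)
  have c9: "cr (a-d) (b-d) = (1/2)*K" by (simp add: cs)
  have c10: "cr (d-a) (e'-a) = (1/4)*K" by (simp add: cs)
  have c11: "cr (d-e') (a-e') = (-1/4)*K" by (simp add: cs)
  have c12: "cr (a-e') (d-e') = (1/4)*K" by (simp add: cs)
  note I = infd[OF c1 _ K] infd[OF c2 _ K] infd[OF c3 _ K] infd[OF c4 _ K] infd[OF c5 _ K]
    infd[OF c6 _ K] infd[OF c7 _ K] infd[OF c8 _ K] infd[OF c9 _ K] infd[OF c10 _ K]
    infd[OF c11 _ K] infd[OF c12 _ K]
  have n1: "norm (c-b) = la" "norm (c-a) = lb" "norm (b-a) = lc" "norm (a-d) = md" "norm (a-c) = lb"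
    by (simp_all add: la_def lb_def lc_def md_def norm_minus_commute)
  have vcd: "c - d = (1/2) *\<^sub>R (c - b)" "b - d = (1/2) *\<^sub>R (b - c)"
    by (simp_all add: vec_eq_iff d_def mid_comp field_simps)
  have n2: "norm (c-d) = la/2" "norm (b-d) = la/2"
    unfolding vcd by (simp_all add: la_def norm_minus_commute)
  have ab: "a \<noteq> b" "a \<noteq> c" "b \<noteq> c" "a \<noteq> d" using K by (auto simp: cs)
  have pos: "la > 0" "lb > 0" "lc > 0" "md > 0" using ab by (auto simp: la_def lb_def lc_def md_def)
  have ap: "4*md^2 = 2*lb^2+2*lc^2-la^2"
    unfolding la_def lb_def lc_def md_def norm2sq
    by (simp add: d_def mid_comp power2_eq_square field_simps)
  have w1: "dw \<epsilon> f a b c = min ((1-\<epsilon>)*(S/la)) (min ((1-f)*(S/lb)) ((1-f)*(S/lc)))"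
    unfolding dw_def using I n1 n2 by (simp add: S_def insert_commute)
  have w2: "dw \<epsilon> f d a b = min ((1-\<epsilon>)*(S/(2*lc))) (min ((1-f)*(S/la)) ((1-f)*(S/(2*md))))"
    unfolding dw_def using I n1 n2 by (simp add: S_def insert_commute)
  have w3: "dw \<epsilon> f d c a = min ((1-\<epsilon>)*(S/(2*lb))) (min ((1-f)*(S/(2*md))) ((1-f)*(S/la)))"
    unfolding dw_def using I n1 n2 by (simp add: S_def insert_commute)
  have p4: "infdist e' (affine hull {a,d}) > 0" "infdist a (affine hull {e',d}) > 0"
     "infdist d (affine hull {e',a}) > 0" using I by (simp_all add: insert_commute)
  have w4: "dw \<epsilon> f e' a d > 0"
    unfolding dw_def using p4 e by simp
  show "dw \<epsilon> f a b c > 0" "dw \<epsilon> f (midpoint b c) c a > 0" "dw \<epsilon> f (midpoint b c) a b > 0"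
    using w1 w2 w3 S pos e unfolding d_def by simp_all
  show "dw \<epsilon> f (midpoint a c) a (midpoint b c) > 0" using w4 d_def e'_def by simp
  show "dw \<epsilon> f (midpoint b c) a b < dw \<epsilon> f a b c"
    using w1 w2 ineq1[OF S pos ap e] d_def by simp
  show "dw \<epsilon> f (midpoint b c) c a < dw \<epsilon> f a b c"
    using w1 w3 ineq2[OF S pos ap e] d_def by simp
qed

lemma ncol:
  fixes a b c :: "real^2"
  assumes "\<not> collinear {a,b,c}" shows "cr (b-a) (c-a) \<noteq> 0"
proof
  assume h: "cr (b-a) (c-a) = 0"
  have "collinear {0, b-a, c-a}"
    unfolding collinear_lemma
  proof (cases "(b-a)$1 = 0")
    case True
    show "b - a = 0 \<or> c - a = 0 \<or> (\<exists>t. c - a = t *\<^sub>R (b - a))"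
    proof (cases "(b-a)$2 = 0")
      case True2: True
      with True have "b - a = 0" by (simp add: vec_eq_iff forall_2)
      thus ?thesis by simp
    next
      case False
      have "(b-a)$2 * (c-a)$1 = 0" using h True by (simp add: cr_def)
      hence z: "(c-a)$1 = 0" using False by simp
      have "c - a = ((c-a)$2/(b-a)$2) *\<^sub>R (b - a)"
        unfolding vec_eq_iff forall_2 using z True False by simp
      thus ?thesis by blast
    qed
  next
    case False
    have "(b-a)$1 * (c-a)$2 = (b-a)$2 * (c-a)$1" using h by (simp add: cr_def)
    hence "(c-a)$2 = ((c-a)$1/(b-a)$1) * (b-a)$2" using False by (simp add: field_simps)
    hence "c - a = ((c-a)$1/(b-a)$1) *\<^sub>R (b - a)"
      unfolding vec_eq_iff forall_2 using False by simp
    thus "b - a = 0 \<or> c - a = 0 \<or> (\<exists>t. c - a = t *\<^sub>R (b - a))" by blast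
  qed
  hence "collinear {b,a,c}" by (subst collinear_3) auto
  thus False using assms by (simp add: insert_commute)
qed

lemma caseA:
  fixes ta tb tc \<delta> C1 C2 C3 C4 :: real
  assumes "0\<le>\<delta>" "\<delta>\<le>C1" "\<delta>\<le>C2" "\<delta>\<le>C3" "ta\<le>tb" "ta\<le>tc"
   "\<bar>ta-tb\<bar>\<le>C1" "\<bar>ta-(tb+tc)/2\<bar> \<le> C2" "\<bar>ta-tc\<bar> \<le> C3"
  shows "\<bar>(ta+\<delta>)-tb\<bar> \<le> C1 \<and> \<bar>(ta+\<delta>)-(tb+tc)/2\<bar> \<le> C2 \<and> \<bar>(ta+\<delta>)-tc\<bar> \<le> C3"
  apply (insert assms) apply (unfold abs_le_iff) apply (elim conjE) apply (intro conjI) apply (simp_all add: field_simps) done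

lemma caseB:
  fixes ta tb tc \<delta> C1 C2 C3 C4 :: real
  assumes "0\<le>\<delta>" "\<delta>\<le>C1" "\<delta>\<le>2*C2-C3" "\<delta>\<le>C4" "tb\<le>ta" "tb\<le>tc" "0 \<le> C2"
   "\<bar>ta-tb\<bar>\<le>C1" "\<bar>ta-(tb+tc)/2\<bar> \<le> C2" "\<bar>ta-tc\<bar> \<le> C3" "\<bar>tb-tc\<bar> \<le> C4"
  shows "\<bar>ta-(tb+\<delta>)\<bar> \<le> C1 \<and> \<bar>ta-((tb+\<delta>)+tc)/2\<bar> \<le> C2 \<and> \<bar>(tb+\<delta>)-tc\<bar> \<le> C4"
  apply (insert assms) apply (unfold abs_le_iff) apply (elim conjE) apply (intro conjI) apply (simp_all add: field_simps) done

lemma caseC: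
  fixes ta tb tc \<delta> C1 C2 C3 C4 :: real
  assumes "0\<le>\<delta>" "\<delta>\<le>C3" "\<delta>\<le>2*C2-C1" "\<delta>\<le>C4" "tc\<le>ta" "tc\<le>tb" "0 \<le> C2"
   "\<bar>ta-tb\<bar>\<le>C1" "\<bar>ta-(tb+tc)/2\<bar> \<le> C2" "\<bar>ta-tc\<bar> \<le> C3" "\<bar>tb-tc\<bar> \<le> C4"
  shows "\<bar>ta-(tc+\<delta>)\<bar> \<le> C3 \<and> \<bar>ta-(tb+(tc+\<delta>))/2\<bar> \<le> C2 \<and> \<bar>tb-(tc+\<delta>)\<bar> \<le> C4"
  apply (insert assms) apply (unfold abs_le_iff) apply (elim conjE) apply (intro conjI) apply (simp_all add: field_simps) done

theorem mainTheorem8: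
  fixes \<epsilon> f \<sigma> :: real and p q r a b c :: "real^2"
  assumes "0 < \<epsilon>" "\<epsilon> < f" "f < (1 + \<epsilon>) / 2" "(1 + \<epsilon>) / 2 < 1" "0 < \<sigma>"
    and "\<not> collinear {p, q, r}"
    and "{a, b, c} = {p, q, r}"
  shows "\<exists>\<Delta>>0. \<forall>\<tau> :: real^2 \<Rightarrow> real.
           \<tau> p \<le> \<tau> q \<and> \<tau> q \<le> \<tau> r \<and> apc \<epsilon> f \<sigma> a b c (\<tau> a) (\<tau> b) (\<tau> c) \<longrightarrow>
           (\<forall>\<delta>\<in>{0..\<Delta>}. let \<tau>' = \<tau>(p := \<tau> p + \<delta>) in
              apc \<epsilon> f \<sigma> a b c (\<tau>' a) (\<tau>' b) (\<tau>' c))"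
proof -
  have nc: "\<not> collinear {a,b,c}" using assms(6,7) by simp
  have K: "cr (b-a) (c-a) \<noteq> 0" using ncol[OF nc] .
  have e: "0 < \<epsilon>" "\<epsilon> < f" "2*f < 1+\<epsilon>" "f < 1" using assms(1-4) by auto
  note G = geo[OF K e]
  define d where "d = midpoint b c"
  define e' where "e' = midpoint a c"
  define C1 where "C1 = 2 * dw \<epsilon> f d c a * \<sigma>"
  define C2 where "C2 = dw \<epsilon> f a b c * \<sigma>"
  define C3 where "C3 = 2 * dw \<epsilon> f d a b * \<sigma>"
  define C4 where "C4 = 4 * dw \<epsilon> f e' a d * \<sigma>"
  have Cp: "C1 > 0" "C2 > 0" "C3 > 0" "C4 > 0" "2*C2-C3 > 0" "2*C2-C1 > 0"
    using G assms(5) unfolding C1_def C2_def C3_def C4_def d_def e'_def by auto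
  define \<Delta> where "\<Delta> = min C1 (min C2 (min C3 (min C4 (min (2*C2-C3) (2*C2-C1)))))"
  have \<Delta>0: "\<Delta> > 0" using Cp unfolding \<Delta>_def by simp
  have dist: "a \<noteq> b" "a \<noteq> c" "b \<noteq> c" using K by (auto simp: cr_def)
  show ?thesis
  proof (intro exI[of _ \<Delta>] conjI allI impI ballI)
    show "\<Delta> > 0" by (rule \<Delta>0)
    fix \<tau> :: "real^2 \<Rightarrow> real" and \<delta>
    assume h: "\<tau> p \<le> \<tau> q \<and> \<tau> q \<le> \<tau> r \<and> apc \<epsilon> f \<sigma> a b c (\<tau> a) (\<tau> b) (\<tau> c)"
    assume \<delta>: "\<delta> \<in> {0..\<Delta>}"
    have mn: "\<tau> p \<le> \<tau> x" if "x \<in> {a,b,c}" for x using that h assms(7) by auto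
    have mA: "\<tau> p \<le> \<tau> a" "\<tau> p \<le> \<tau> b" "\<tau> p \<le> \<tau> c" using mn by auto
    have pin: "p \<in> {a,b,c}" using assms(7) by auto
    have A: "\<bar>\<tau> a - \<tau> b\<bar> \<le> C1" "\<bar>\<tau> a - (\<tau> b + \<tau> c)/2\<bar> \<le> C2"
      "\<bar>\<tau> a - \<tau> c\<bar> \<le> C3" "\<bar>\<tau> b - \<tau> c\<bar> \<le> C4"
      using h unfolding apc_def Let_def C1_def C2_def C3_def C4_def d_def e'_def by auto
    have dl: "0 \<le> \<delta>" "\<delta> \<le> C1" "\<delta> \<le> C2" "\<delta> \<le> C3" "\<delta> \<le> C4" "\<delta> \<le> 2*C2-C3" "\<delta> \<le> 2*C2-C1"
      using \<delta> unfolding \<Delta>_def by auto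
    have goal: "\<bar>ta - tb\<bar> \<le> C1 \<and> \<bar>ta - (tb + tc)/2\<bar> \<le> C2 \<and>
      \<bar>ta - tc\<bar> \<le> C3 \<and> \<bar>tb - tc\<bar> \<le> C4"
      if "ta = (\<tau>(p := \<tau> p + \<delta>)) a" "tb = (\<tau>(p := \<tau> p + \<delta>)) b" "tc = (\<tau>(p := \<tau> p + \<delta>)) c"
      for ta tb tc
    proof -
      consider "p = a" | "p = b" | "p = c" using pin by auto
      thus ?thesis
      proof cases
        case 1
        hence o: "\<tau> a \<le> \<tau> b" "\<tau> a \<le> \<tau> c" using mA by auto
        show ?thesis using 1 that dist caseA[OF dl(1-4) o A(1-3)] A(4)
          by auto
      next
        case 2
        hence o: "\<tau> b \<le> \<tau> a" "\<tau> b \<le> \<tau> c" using mA by auto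
        have "0 \<le> C2" using Cp by simp
        thus ?thesis using 2 that dist caseB[OF dl(1,2,6,5) o _ A] A
          by (auto simp: abs_minus_commute)
      next
        case 3
        hence o: "\<tau> c \<le> \<tau> a" "\<tau> c \<le> \<tau> b" using mA by auto
        have "0 \<le> C2" using Cp by simp
        thus ?thesis using 3 that dist caseC[OF dl(1,4,7,5) o _ A] A
          by (auto simp: abs_minus_commute)
      qed
    qed
    show "let \<tau>' = \<tau>(p := \<tau> p + \<delta>) in apc \<epsilon> f \<sigma> a b c (\<tau>' a) (\<tau>' b) (\<tau>' c)"
      using goal[OF refl refl refl]
      unfolding apc_def Let_def C1_def C2_def C3_def C4_def d_def e'_def by auto
  qed
qed

end
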